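(* For every $n\ge1$, no locally valid MV assignment of $M_{2,n}$ has exactly $2n-1$ flippable faces; equivalently, no vertex of ${\rm OFG}(M_{2,n})$ has degree $2n-1$.
   Context: The $2\times n$ Miura-ori $M_{2,n}$ ($n\ge1$) has faces $\alpha_{i,j}$ ($i\in\{1,2\}$, $j\in\{1,\dots,n\}$), interior vertices $x_1,\dots,x_{n-1}$, and creases $e_0$ and $e_{3k-1},e_{3k},e_{3k+1}$ ($k=1,\dots,n-1$). At $x_k$ the creases are left $e_{3k-3}$, top $e_{3k-1}$, right $e_{3k}$, bottom $e_{3k+1}$. Face $\alpha_{1,j}$ is bordered by those of $e_{3j-4}$ (iff $j\ge2$), $e_{3j-3}$, $e_{3j-1}$ (iff $j\le n-1$); $\alpha_{2,j}$ by those of $e_{3j-2}$ (iff $j\ge2$), $e_{3j-3}$, $e_{3j+1}$ (iff $j\le n-1$). An MV assignment $\mu$ maps creases to $\{1,-1\}$; it is locally valid if for each $k$ exactly one of $\mu(e_{3k-1}),\mu(e_{3k}),\mu(e_{3k+1})$ differs from $\mu(e_{3k-3})$. The face flip $\mu_\alpha$ negates $\mu$ on the creases bordering $\alpha$; $\alpha$ is flippable under $\mu$ if $\mu,\mu_\alpha$ are both locally valid. ${\rm OFG}(M_{2,n})$ has the locally valid assignments as vertices, with $\mu\sim\mu_\alpha$ for each flippable $\alpha$; the degree of $\mu$ is its number of flippable faces. *)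

theory Defs
  imports Main
begin

text \<open>Crease e_m is represented by the natural number m.
  Creases: e_0 and e_{3k-1}, e_{3k}, e_{3k+1} for k = 1..n-1.
  Faces alpha_{i,j} are represented by pairs (i,j) with i in {1,2}, j in {1..n}.
  MV assignments are functions nat => int taking values in {1,-1} on the creases.\<close>

definition creases :: "nat \<Rightarrow> nat set" where
  "creases n = {0} \<union> (\<Union>k\<in>{1..n-1}. {3*k-1, 3*k, 3*k+1})"

definition faces :: "nat \<Rightarrow> (nat \<times> nat) set" where
  "faces n = {1,2} \<times> {1..n}"

definition is_MV :: "nat \<Rightarrow> (nat \<Rightarrow> int) \<Rightarrow> bool" where
  "is_MV n \<mu> \<longleftrightarrow> (\<forall>c\<in>creases n. \<mu> c = 1 \<or> \<mu> c = -1)"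

definition border :: "nat \<Rightarrow> nat \<times> nat \<Rightarrow> nat set" where
  "border n f = (case f of (i, j) \<Rightarrow>
     if i = 1 then
       (if 2 \<le> j then {3*j-4} else {}) \<union> {3*j-3} \<union> (if j \<le> n-1 then {3*j-1} else {})
     else
       (if 2 \<le> j then {3*j-2} else {}) \<union> {3*j-3} \<union> (if j \<le> n-1 then {3*j+1} else {}))"

text \<open>Local validity: at each interior vertex x_k exactly one of the top, right, bottom
  creases differs from the left crease.\<close>
definition locally_valid :: "nat \<Rightarrow> (nat \<Rightarrow> int) \<Rightarrow> bool" where
  "locally_valid n \<mu> \<longleftrightarrow>
     (\<forall>k\<in>{1..n-1}. card {c\<in>{3*k-1, 3*k, 3*k+1}. \<mu> c \<noteq> \<mu> (3*k-3)} = 1)"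

definition face_flip :: "nat \<Rightarrow> (nat \<Rightarrow> int) \<Rightarrow> nat \<times> nat \<Rightarrow> (nat \<Rightarrow> int)" where
  "face_flip n \<mu> f = (\<lambda>c. if c \<in> border n f then - \<mu> c else \<mu> c)"

definition flippable :: "nat \<Rightarrow> (nat \<Rightarrow> int) \<Rightarrow> nat \<times> nat \<Rightarrow> bool" where
  "flippable n \<mu> f \<longleftrightarrow> locally_valid n \<mu> \<and> locally_valid n (face_flip n \<mu> f)"

definition ofg_degree :: "nat \<Rightarrow> (nat \<Rightarrow> int) \<Rightarrow> nat" where
  "ofg_degree n \<mu> = card {f\<in>faces n. flippable n \<mu> f}"

end

theory Submission imports Defs begin

lemma card3:
  assumes "x\<noteq>y" "x\<noteq>z" "y\<noteq>z"
  shows "card {c\<in>{x,y,z}. P c} = 1 \<longleftrightarrow>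
     (P x \<and> \<not>P y \<and> \<not>P z) \<or> (\<not>P x \<and> P y \<and> \<not>P z) \<or> (\<not>P x \<and> \<not>P y \<and> P z)"
proof -
  have e: "{c\<in>{x,y,z}. P c} = (if P x then {x} else {}) \<union> (if P y then {y} else {}) \<union> (if P z then {z} else {})"
    by auto
  show ?thesis unfolding e using assms
    by (cases "P x"; cases "P y"; cases "P z"; simp add: card_insert_if insert_commute)
qed

lemma lv_iff: "locally_valid n \<mu> \<longleftrightarrow> (\<forall>k\<in>{1..n-1}.
   let L = \<mu> (3*k-3); T = \<mu> (3*k-1); R = \<mu> (3*k); B = \<mu> (3*k+1) in
   (T \<noteq> L \<and> R = L \<and> B = L) \<or> (T = L \<and> R \<noteq> L \<and> B = L) \<or> (T = L \<and> R = L \<and> B \<noteq> L))"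
proof -
  have "card {c\<in>{3*k-1, 3*k, 3*k+1}. \<mu> c \<noteq> \<mu> (3*k-3)} = 1 \<longleftrightarrow>
   (let L = \<mu> (3*k-3); T = \<mu> (3*k-1); R = \<mu> (3*k); B = \<mu> (3*k+1) in
   (T \<noteq> L \<and> R = L \<and> B = L) \<or> (T = L \<and> R \<noteq> L \<and> B = L) \<or> (T = L \<and> R = L \<and> B \<noteq> L))"
    if "k \<in> {1..n-1}" for k
  proof -
    have d: "3*k-1 \<noteq> 3*k" "3*k-1 \<noteq> 3*k+1" "3*k \<noteq> 3*k+1" using that by auto
    show ?thesis using card3[OF d, of "\<lambda>c. \<mu> c \<noteq> \<mu> (3*k-3)"] by (simp only: Let_def not_not)
  qed
  then show ?thesis unfolding locally_valid_def by (rule ball_cong[OF refl])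
qed

lemma mem1:
  assumes "1 \<le> m" "m \<le> n-1" "1 \<le> j" "j \<le> n"
  shows "(3*m-3 \<in> border n (1,j) \<longleftrightarrow> j = m) \<and> (3*m-1 \<in> border n (1,j) \<longleftrightarrow> j = m \<or> j = m+1)
    \<and> (3*m \<in> border n (1,j) \<longleftrightarrow> j = m+1) \<and> (3*m+1 \<notin> border n (1,j))"
  using assms unfolding border_def by (auto split: if_splits; presburger)

lemma mem2:
  assumes "1 \<le> m" "m \<le> n-1" "1 \<le> j" "j \<le> n"
  shows "(3*m-3 \<in> border n (2,j) \<longleftrightarrow> j = m) \<and> (3*m-1 \<notin> border n (2,j))
    \<and> (3*m \<in> border n (2,j) \<longleftrightarrow> j = m+1) \<and> (3*m+1 \<in> border n (2,j) \<longleftrightarrow> j = m \<or> j = m+1)"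
  using assms unfolding border_def by (auto split: if_splits; presburger)

lemma cr:
  assumes "1 \<le> k" "k \<le> n-1"
  shows "3*k-3 \<in> creases n" "3*k-1 \<in> creases n" "3*k \<in> creases n" "3*k+1 \<in> creases n"
proof -
  show "3*k-1 \<in> creases n" "3*k \<in> creases n" "3*k+1 \<in> creases n"
    using assms unfolding creases_def by auto
  show "3*k-3 \<in> creases n"
  proof (cases "k = 1")
    case True then show ?thesis unfolding creases_def by auto
  next
    case False
    then have "3*k-3 = 3*(k-1)" "k-1 \<in> {1..n-1}" using assms by auto
    then show ?thesis unfolding creases_def by blast
  qed
qed

lemma pm1: "is_MV n \<mu> \<Longrightarrow> c \<in> creases n \<Longrightarrow> \<mu> c = 1 \<or> \<mu> c = -1"
  unfolding is_MV_def by auto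

lemma flip_ok:
  assumes mv: "is_MV n \<mu>" and lv: "locally_valid n \<mu>"
    and allR: "\<forall>k\<in>{1..n-1}. \<mu>(3*k-1) = \<mu>(3*k-3) \<and> \<mu>(3*k+1) = \<mu>(3*k-3)"
    and f: "f \<in> faces n"
  shows "flippable n \<mu> f"
proof -
  obtain i j where fij: "f = (i,j)" "i = 1 \<or> i = 2" "1 \<le> j" "j \<le> n" using f unfolding faces_def by auto
  have "locally_valid n (face_flip n \<mu> (i,j))"
    unfolding lv_iff
  proof
    fix m assume m: "m \<in> {1..n-1}"
    then have m1: "1 \<le> m" "m \<le> n-1" by auto
    have R: "\<mu>(3*m) \<noteq> \<mu>(3*m-3)" and TB: "\<mu>(3*m-1) = \<mu>(3*m-3)" "\<mu>(3*m+1) = \<mu>(3*m-3)"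
      using lv allR m unfolding lv_iff Let_def by auto
    have p: "\<mu>(3*m-3) = 1 \<or> \<mu>(3*m-3) = -1" "\<mu>(3*m) = 1 \<or> \<mu>(3*m) = -1"
      using pm1[OF mv] cr[OF m1] by auto
    show "let L = face_flip n \<mu> (i,j) (3*m-3); T = face_flip n \<mu> (i,j) (3*m-1);
       R = face_flip n \<mu> (i,j) (3*m); B = face_flip n \<mu> (i,j) (3*m+1) in
   (T \<noteq> L \<and> R = L \<and> B = L) \<or> (T = L \<and> R \<noteq> L \<and> B = L) \<or> (T = L \<and> R = L \<and> B \<noteq> L)"
      using fij(2) mem1[OF m1 fij(3,4)] mem2[OF m1 fij(3,4)] R TB p
      unfolding face_flip_def Let_def
      by (cases "j = m"; cases "j = m+1"; auto)
  qed
  then show ?thesis using lv fij unfolding flippable_def by simp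
qed

lemma lv_at:
  assumes "locally_valid n \<nu>" "1 \<le> k" "k \<le> n-1"
  shows "(\<nu>(3*k-1) \<noteq> \<nu>(3*k-3) \<and> \<nu>(3*k) = \<nu>(3*k-3) \<and> \<nu>(3*k+1) = \<nu>(3*k-3)) \<or>
         (\<nu>(3*k-1) = \<nu>(3*k-3) \<and> \<nu>(3*k) \<noteq> \<nu>(3*k-3) \<and> \<nu>(3*k+1) = \<nu>(3*k-3)) \<or>
         (\<nu>(3*k-1) = \<nu>(3*k-3) \<and> \<nu>(3*k) = \<nu>(3*k-3) \<and> \<nu>(3*k+1) \<noteq> \<nu>(3*k-3))"
proof -
  have "k \<in> {1..n-1}" using assms by simp
  then show ?thesis using assms(1) unfolding lv_iff Let_def by blast
qed

lemma notflip_T: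
  assumes mv: "is_MV n \<mu>" and lv: "locally_valid n \<mu>" and k: "1 \<le> k" "k \<le> n-1"
    and T: "\<mu>(3*k-1) \<noteq> \<mu>(3*k-3)"
  shows "\<not> flippable n \<mu> (1,k)" "\<not> flippable n \<mu> (2,k+1)"
proof -
  have RB: "\<mu>(3*k) = \<mu>(3*k-3)" "\<mu>(3*k+1) = \<mu>(3*k-3)"
    using lv_at[OF lv k] T by auto
  have p: "\<mu>(3*k-3) = 1 \<or> \<mu>(3*k-3) = -1" "\<mu>(3*k-1) = 1 \<or> \<mu>(3*k-1) = -1"
    using pm1[OF mv] cr[OF k] by auto
  have j1: "1 \<le> k" "k \<le> n" "1 \<le> k+1" "k+1 \<le> n" using k by auto
  show "\<not> flippable n \<mu> (1,k)"
  proof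
    assume "flippable n \<mu> (1,k)"
    then have "locally_valid n (face_flip n \<mu> (1,k))" unfolding flippable_def by simp
    from lv_at[OF this k] show False
      using mem1[OF k j1(1,2)] RB T p unfolding face_flip_def by auto
  qed
  show "\<not> flippable n \<mu> (2,k+1)"
  proof
    assume "flippable n \<mu> (2,k+1)"
    then have "locally_valid n (face_flip n \<mu> (2,k+1))" unfolding flippable_def by simp
    from lv_at[OF this k] show False
      using mem2[OF k j1(3,4)] RB T p unfolding face_flip_def by auto
  qed
qed

lemma notflip_B:
  assumes mv: "is_MV n \<mu>" and lv: "locally_valid n \<mu>" and k: "1 \<le> k" "k \<le> n-1"
    and B: "\<mu>(3*k+1) \<noteq> \<mu>(3*k-3)"
  shows "\<not> flippable n \<mu> (2,k)" "\<not> flippable n \<mu> (1,k+1)"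
proof -
  have RB: "\<mu>(3*k) = \<mu>(3*k-3)" "\<mu>(3*k-1) = \<mu>(3*k-3)"
    using lv_at[OF lv k] B by auto
  have p: "\<mu>(3*k-3) = 1 \<or> \<mu>(3*k-3) = -1" "\<mu>(3*k+1) = 1 \<or> \<mu>(3*k+1) = -1"
    using pm1[OF mv] cr[OF k] by auto
  have j1: "1 \<le> k" "k \<le> n" "1 \<le> k+1" "k+1 \<le> n" using k by auto
  show "\<not> flippable n \<mu> (2,k)"
  proof
    assume "flippable n \<mu> (2,k)"
    then have "locally_valid n (face_flip n \<mu> (2,k))" unfolding flippable_def by simp
    from lv_at[OF this k] show False
      using mem2[OF k j1(1,2)] RB B p unfolding face_flip_def by auto
  qed
  show "\<not> flippable n \<mu> (1,k+1)"
  proof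
    assume "flippable n \<mu> (1,k+1)"
    then have "locally_valid n (face_flip n \<mu> (1,k+1))" unfolding flippable_def by simp
    from lv_at[OF this k] show False
      using mem1[OF k j1(3,4)] RB B p unfolding face_flip_def by auto
  qed
qed

lemma card_faces: "finite (faces n)" "card (faces n) = 2*n"
  unfolding faces_def by (auto simp: card_cartesian_product)

lemma two_out:
  assumes "a \<in> faces n" "b \<in> faces n" "a \<noteq> b" "\<not> flippable n \<mu> a" "\<not> flippable n \<mu> b"
  shows "ofg_degree n \<mu> \<le> 2*n - 2"
proof -
  have "{f\<in>faces n. flippable n \<mu> f} \<subseteq> faces n - {a,b}" using assms by auto
  then have "ofg_degree n \<mu> \<le> card (faces n - {a,b})"
    unfolding ofg_degree_def by (intro card_mono) (auto simp: card_faces)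
  also have "\<dots> = 2*n - 2" using assms card_faces by (simp add: card_Diff_subset)
  finally show ?thesis .
qed

theorem lemma4p8:
  fixes n :: nat and \<mu> :: "nat \<Rightarrow> int"
  assumes "n \<ge> 1" and "is_MV n \<mu>" and "locally_valid n \<mu>"
  shows "ofg_degree n \<mu> \<noteq> 2 * n - 1"
proof (cases "\<forall>k\<in>{1..n-1}. \<mu>(3*k-1) = \<mu>(3*k-3) \<and> \<mu>(3*k+1) = \<mu>(3*k-3)")
  case True
  then have "{f\<in>faces n. flippable n \<mu> f} = faces n"
    using flip_ok[OF assms(2,3) True] by auto
  then show ?thesis using assms(1) card_faces unfolding ofg_degree_def by simp
next
  case False
  then obtain k where k: "1 \<le> k" "k \<le> n-1"
    and d: "\<mu>(3*k-1) \<noteq> \<mu>(3*k-3) \<or> \<mu>(3*k+1) \<noteq> \<mu>(3*k-3)" by auto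
  have in1: "(1,k) \<in> faces n" "(2,k+1) \<in> faces n" "(2,k) \<in> faces n" "(1,k+1) \<in> faces n"
    using k unfolding faces_def by auto
  have "ofg_degree n \<mu> \<le> 2*n - 2"
    using d
  proof
    assume T: "\<mu>(3*k-1) \<noteq> \<mu>(3*k-3)"
    show ?thesis using two_out[OF in1(1,2) _ notflip_T[OF assms(2,3) k T]] by simp
  next
    assume B: "\<mu>(3*k+1) \<noteq> \<mu>(3*k-3)"
    show ?thesis using two_out[OF in1(3,4) _ notflip_B[OF assms(2,3) k B]] by simp
  qed
  then show ?thesis using k by linarith
qed

end
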